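(* For every $n\in\mathbb{N}$, the Fibonacci-sum set-graph $G^F_{A^{(n)}}$ has no pendant vertices (i.e. no vertex of degree exactly $1$).
   Context: Let $\mathcal{F}=\{f_m\}_{m\ge 0}$ be the Fibonacci numbers, $f_0=0$, $f_1=1$, $f_m=f_{m-1}+f_{m-2}$. For $n\in\mathbb{N}$ let $A^{(n)}=\{1,2,\dots,n\}$. The Fibonacci-sum set-graph $G^F_{A^{(n)}}$ is the multigraph (loops and multiple edges allowed) whose vertices are in bijection with the nonempty subsets of $A^{(n)}$ (so it has $2^n-1$ vertices); between the vertices corresponding to distinct subsets $S,T$ there is one edge for each pair $(i',j')$ with $i'\in S$, $j'\in T$, $i'\neq j'$ and $i'+j'\in\mathcal{F}$, and at the vertex corresponding to $S$ there is one loop for each pair of distinct elements $i',j'\in S$ with $i'+j'\in\mathcal{F}$. The degree of a vertex $v$ is $2l(v)+\sum_{u\neq v}\epsilon(v,u)$, where $l(v)$ is the number of loops at $v$ and $\epsilon(v,u)$ the number of edges between $v$ and $u$. *)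

theory Defs
  imports "HOL-Number_Theory.Fib"
begin

definition fib_numbers :: "nat set" where
  "fib_numbers = range fib"

text \<open>Vertices of the Fibonacci-sum set-graph on A^(n) = {1..n}: nonempty subsets.\<close>
definition fs_vertices :: "nat \<Rightarrow> nat set set" where
  "fs_vertices n = {S. S \<subseteq> {1..n} \<and> S \<noteq> {}}"

definition fs_edges :: "nat set \<Rightarrow> nat set \<Rightarrow> nat" where
  "fs_edges S T = card {(i, j). i \<in> S \<and> j \<in> T \<and> i \<noteq> j \<and> i + j \<in> fib_numbers}"

definition fs_loops :: "nat set \<Rightarrow> nat" where
  "fs_loops S = card {{i, j} | i j. i \<in> S \<and> j \<in> S \<and> i \<noteq> j \<and> i + j \<in> fib_numbers}"

definition fs_degree :: "nat \<Rightarrow> nat set \<Rightarrow> nat" where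
  "fs_degree n S = 2 * fs_loops S + (\<Sum>T \<in> fs_vertices n - {S}. fs_edges S T)"

end

theory Submission
  imports Defs
begin

lemma fin_vert: "finite (fs_vertices n)"
  unfolding fs_vertices_def by (rule finite_subset[of _ "Pow {1..n}"]) auto

lemma card_ge1: "finite X \<Longrightarrow> x \<in> X \<Longrightarrow> 1 \<le> card X"
  using card_0_eq by fastforce

lemma edges_pos:
  assumes "i \<in> S" "j \<in> T" "i \<noteq> j" "i + j \<in> fib_numbers" "finite S" "finite T"
  shows "fs_edges S T \<ge> 1"
proof -
  have "finite {(i, j). i \<in> S \<and> j \<in> T \<and> i \<noteq> j \<and> i + j \<in> fib_numbers}"
    by (rule finite_subset[of _ "S \<times> T"]) (auto simp: assms)
  moreover have "(i,j) \<in> {(i, j). i \<in> S \<and> j \<in> T \<and> i \<noteq> j \<and> i + j \<in> fib_numbers}"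
    using assms by auto
  ultimately show ?thesis unfolding fs_edges_def by (rule card_ge1)
qed

lemma edges_zero:
  assumes "\<forall>i\<in>S. \<forall>j\<in>T. \<not>(i \<noteq> j \<and> i + j \<in> fib_numbers)"
  shows "fs_edges S T = 0"
proof -
  have "{(i, j). i \<in> S \<and> j \<in> T \<and> i \<noteq> j \<and> i + j \<in> fib_numbers} = {}"
    using assms by auto
  then show ?thesis unfolding fs_edges_def by (metis card.empty)
qed

theorem theorem2p1:
  fixes n :: nat
  shows "\<forall>S \<in> fs_vertices n. fs_degree n S \<noteq> 1"
proof
  fix S assume S: "S \<in> fs_vertices n"
  hence Ssub: "S \<subseteq> {1..n}" and Sne: "S \<noteq> {}" unfolding fs_vertices_def by auto
  have finS: "finite S" using Ssub finite_subset by blast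
  show "fs_degree n S \<noteq> 1"
  proof (cases "\<exists>i\<in>S. \<exists>j\<in>{1..n}. i \<noteq> j \<and> i + j \<in> fib_numbers")
    case False
    have e: "\<forall>T \<in> fs_vertices n - {S}. fs_edges S T = 0"
    proof
      fix T assume "T \<in> fs_vertices n - {S}"
      hence "T \<subseteq> {1..n}" unfolding fs_vertices_def by auto
      thus "fs_edges S T = 0" using False by (intro edges_zero) (meson subsetD)
    qed
    have "{{i, j} | i j. i \<in> S \<and> j \<in> S \<and> i \<noteq> j \<and> i + j \<in> fib_numbers} = {}"
    proof (rule equals0I)
      fix x assume "x \<in> {{i, j} | i j. i \<in> S \<and> j \<in> S \<and> i \<noteq> j \<and> i + j \<in> fib_numbers}"
      then obtain i j where "i \<in> S" "j \<in> S" "i \<noteq> j" "i + j \<in> fib_numbers" by blast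
      thus False using False Ssub by (meson subsetD)
    qed
    hence "fs_loops S = 0" unfolding fs_loops_def by (metis card.empty)
    thus ?thesis using e unfolding fs_degree_def by simp
  next
    case True
    then obtain i j where ij: "i \<in> S" "j \<in> {1..n}" "i \<noteq> j" "i + j \<in> fib_numbers" by blast
    show ?thesis
    proof (cases "S = {i,j}")
      case True
      have fin: "finite {{i, j} | i j. i \<in> S \<and> j \<in> S \<and> i \<noteq> j \<and> i + j \<in> fib_numbers}"
        by (rule finite_subset[of _ "Pow S"]) (auto simp: finS)
      have "{i,j} \<in> {{i, j} | i j. i \<in> S \<and> j \<in> S \<and> i \<noteq> j \<and> i + j \<in> fib_numbers}"
        using ij True by blast
      hence "fs_loops S \<ge> 1" unfolding fs_loops_def by (rule card_ge1[OF fin])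
      thus ?thesis unfolding fs_degree_def by simp
    next
      case False
      have i0: "i \<in> {1..n}" using ij Ssub by auto
      have sub: "{{j},{i,j}} \<subseteq> fs_vertices n - {S}"
        using False ij i0 unfolding fs_vertices_def by auto
      have d: "{j} \<noteq> {i,j}" using ij by auto
      have "fs_edges S {j} \<ge> 1" using ij finS by (intro edges_pos[of i _ j]) auto
      moreover have "fs_edges S {i,j} \<ge> 1" using ij finS by (intro edges_pos[of i _ j]) auto
      ultimately have "2 \<le> (\<Sum>T\<in>{{j},{i,j}}. fs_edges S T)" using d by simp
      also have "\<dots> \<le> (\<Sum>T \<in> fs_vertices n - {S}. fs_edges S T)"
        by (rule sum_mono2) (use sub fin_vert in auto)
      finally show ?thesis unfolding fs_degree_def by simp
    qed
  qed
qed

end
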